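(* Let $n\ge 3$ and let $\Gamma\subset GL(n,\mathbb R)$ be the group of block matrices $\begin{pmatrix} A & b\\ 0 & 1\end{pmatrix}$ with $A\in GL(n-1,\mathbb Z)$ and $b\in\mathbb Z^{n-1}$, acting linearly on $\mathbb R^n$. Then every non-zero $x\in\mathbb R^n$ has unbounded $\Gamma$-orbit (so the action of $\Gamma$ on $\mathbb R^n$ is expansive), yet no element $\gamma\in\Gamma$ is an expansive automorphism of $\mathbb R^n$, i.e. for no $\gamma\in\Gamma$ does the cyclic group $\{\gamma^m:m\in\mathbb Z\}$ act expansively on $\mathbb R^n$.
   Context: An action of a group $\Gamma$ on $\mathbb R^n$ (additive topological group) by linear automorphisms is expansive if there is a neighborhood $U$ of $0$ with $\bigcap_{\gamma\in\Gamma}\gamma^{-1}(U)=\{0\}$. *)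

theory Defs
  imports "HOL-Analysis.Analysis"
begin

text \<open>R^n is modelled as real ^ ('m option) with n = CARD('m) + 1; the coordinates
  Some i (i :: 'm) are the first n-1 coordinates and None is the last coordinate.\<close>

definition integer_matrix :: "real ^ 'm ^ 'm \<Rightarrow> bool" where
  "integer_matrix A \<longleftrightarrow> (\<forall>i j. A $ i $ j \<in> \<int>)"

definition GL_int :: "(real ^ 'm ^ 'm) set" where
  "GL_int = {A. integer_matrix A \<and>
      (\<exists>B. integer_matrix B \<and> A ** B = mat 1 \<and> B ** A = mat 1)}"

definition Gamma_aff :: "(real ^ ('m::finite option) ^ ('m option)) set" where
  "Gamma_aff = {M. (\<exists>A \<in> (GL_int :: (real ^ 'm ^ 'm) set). \<forall>i j. M $ Some i $ Some j = A $ i $ j)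
      \<and> (\<forall>i. M $ Some i $ None \<in> \<int>)
      \<and> (\<forall>j. M $ None $ Some j = 0)
      \<and> M $ None $ None = 1}"

definition expansive :: "('a::topological_space \<Rightarrow> 'a) set \<Rightarrow> 'a \<Rightarrow> bool" where
  "expansive G z \<longleftrightarrow> (\<exists>U. z \<in> interior U \<and> (\<Inter>g\<in>G. g -` U) = {z})"

definition cyclic_group :: "('a \<Rightarrow> 'a) \<Rightarrow> ('a \<Rightarrow> 'a) set" where
  "cyclic_group f = {f ^^ k | k. True} \<union> {(inv f) ^^ k | k. True}"

end

theory Submission
  imports Defs
begin

lemma sum_option_UNIV:
  fixes f :: "'a::finite option \<Rightarrow> 'b::comm_monoid_add"
  shows "sum f UNIV = f None + (\<Sum>i\<in>UNIV. f (Some i))"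
proof -
  have "sum f UNIV = sum f (insert None (range Some))" by (simp add: UNIV_option_conv[symmetric])
  also have "\<dots> = f None + sum f (range Some)" by (subst sum.insert) auto
  also have "sum f (range Some) = (\<Sum>i\<in>UNIV. f (Some i))" by (subst sum.reindex) auto
  finally show ?thesis .
qed

definition elemM :: "'n::finite \<Rightarrow> 'n \<Rightarrow> real \<Rightarrow> real ^ 'n ^ 'n" where
  "elemM p q k = (\<chi> r c. (if r = c then 1 else 0) + (if r = p \<and> c = q then k else 0))"

lemma if0_mult: "(if b then x else (0::real)) * y = (if b then x * y else 0)"
  "y * (if b then x else (0::real)) = (if b then y * x else 0)" by auto

lemma if_conj0: "(if a \<and> b then x else (0::real)) = (if a then (if b then x else 0) else 0)" by auto

lemma elemM_inv: "p \<noteq> q \<Longrightarrow> elemM p q k ** elemM p q (-k) = mat 1"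
  unfolding elemM_def matrix_matrix_mult_def mat_def
  by (simp add: vec_eq_iff distrib_left distrib_right sum.distrib if0_mult if_conj0 sum.delta sum.delta')

lemma elemM_int: "k \<in> \<int> \<Longrightarrow> integer_matrix (elemM p q k)"
  unfolding elemM_def integer_matrix_def by auto

lemma elemM_GL: assumes "p \<noteq> q" "k \<in> \<int>" shows "elemM p q k \<in> GL_int"
proof -
  have "- k \<in> \<int>" using assms by simp
  moreover have "elemM p q (- k) ** elemM p q k = mat 1" using elemM_inv[OF assms(1), of "-k"] by simp
  ultimately show ?thesis unfolding GL_int_def
    using elemM_inv[OF assms(1), of k] elemM_int[OF assms(2)] elemM_int[of "-k"] by blast
qed

lemma elemM_apply: "p \<noteq> q \<Longrightarrow> (elemM p q k *v x) $ p = x $ p + k * x $ q"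
  unfolding elemM_def matrix_vector_mult_def
  by (simp add: distrib_left distrib_right sum.distrib if0_mult if_conj0 sum.delta sum.delta')


lemma mat1_GL: "(mat 1 :: real ^ 'n ^ 'n) \<in> GL_int"
proof -
  have "integer_matrix (mat 1 :: real ^ 'n ^ 'n)" unfolding integer_matrix_def by (simp add: mat_def)
  then show ?thesis unfolding GL_int_def using matrix_mul_lid[of "mat 1 :: real ^ 'n ^ 'n"] by blast
qed

lemma elemM_Gamma:
  fixes i :: "'m::finite"
  assumes "q \<noteq> Some i" "k \<in> \<int>"
  shows "elemM (Some i) q k \<in> Gamma_aff"
proof -
  have A: "\<exists>A \<in> (GL_int :: (real ^ 'm ^ 'm) set). \<forall>a b. elemM (Some i) q k $ Some a $ Some b = A $ a $ b"
  proof (cases q)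
    case None
    then show ?thesis using mat1_GL by (intro bexI[of _ "mat 1"]) (auto simp: elemM_def mat_def)
  next
    case (Some j)
    then have "i \<noteq> j" using assms by auto
    then show ?thesis using elemM_GL[OF _ assms(2)] Some
      by (intro bexI[of _ "elemM i j k"]) (auto simp: elemM_def)
  qed
  show ?thesis unfolding Gamma_aff_def using A assms by (auto simp: elemM_def)
qed

lemma orbit_unbounded:
  assumes card: "CARD('m::finite) \<ge> 2" and x0: "(x :: real ^ ('m option)) \<noteq> 0"
  shows "\<not> bounded {M *v x | M. M \<in> (Gamma_aff :: (real ^ ('m option) ^ ('m option)) set)}"
proof -
  obtain i q where iq: "q \<noteq> Some i" "x $ q \<noteq> 0"
  proof (cases "x $ None = 0")
    case False
    then show ?thesis using that[of None] by auto
  next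
    case True
    obtain j where j: "x $ Some j \<noteq> 0"
    proof -
      have "\<exists>j. x $ Some j \<noteq> 0"
      proof (rule ccontr)
        assume "\<not> ?thesis"
        then have "\<forall>r. x $ r = 0" using True by (metis option.exhaust)
        then show False using x0 by (simp add: vec_eq_iff)
      qed
      then show ?thesis using that by blast
    qed
    obtain i :: 'm where "i \<noteq> j"
    proof -
      have "\<exists>i::'m. i \<noteq> j"
      proof (rule ccontr)
        assume "\<not> ?thesis"
        then have "(UNIV :: 'm set) = {j}" by auto
        then show False using card by (metis card.empty card_insert_if finite.emptyI insert_absorb insert_not_empty numeral_le_one_iff semiring_norm(69) One_nat_def)
      qed
      then show ?thesis using that by blast
    qed
    then show ?thesis using that[of "Some j" i] j by auto
  qed
  show ?thesis
  proof
    assume "bounded {M *v x | M. M \<in> (Gamma_aff :: (real ^ ('m option) ^ ('m option)) set)}"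
    then obtain a where a: "\<And>M. M \<in> (Gamma_aff :: (real ^ ('m option) ^ ('m option)) set) \<Longrightarrow> norm (M *v x) \<le> a"
      unfolding bounded_iff by blast
    have pos: "\<bar>x $ q\<bar> > 0" using iq by simp
    obtain k :: nat where k: "(a + \<bar>x $ Some i\<bar>) / \<bar>x $ q\<bar> < real k" using reals_Archimedean2 by blast
    then have k2: "a + \<bar>x $ Some i\<bar> < real k * \<bar>x $ q\<bar>" using pos by (simp add: divide_less_eq)
    have "elemM (Some i) q (real k) \<in> Gamma_aff" using elemM_Gamma[OF iq(1)] by simp
    then have "norm (elemM (Some i) q (real k) *v x) \<le> a" by (rule a)
    moreover have "\<bar>(elemM (Some i) q (real k) *v x) $ Some i\<bar> \<le> norm (elemM (Some i) q (real k) *v x)"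
      by (rule component_le_norm_cart)
    moreover have "(elemM (Some i) q (real k) *v x) $ Some i = x $ Some i + real k * x $ q"
      using elemM_apply iq(1) by metis
    moreover have "\<bar>x $ Some i + real k * x $ q\<bar> \<ge> real k * \<bar>x $ q\<bar> - \<bar>x $ Some i\<bar>"
      by (simp add: abs_mult)
    ultimately show False using k2 by linarith
  qed
qed


lemma mv_comp: "(M *v x) $ r = (\<Sum>c\<in>UNIV. M $ r $ c * x $ c)"
  by (simp add: matrix_vector_mult_def)

lemma funpow_fix: "f w = w \<Longrightarrow> (f ^^ k) w = w"
  by (induction k) auto

lemma not_expansive:
  assumes g: "\<gamma> \<in> (Gamma_aff :: (real ^ ('m::finite option) ^ ('m option)) set)"
  shows "\<not> expansive (cyclic_group (\<lambda>x. \<gamma> *v x)) 0"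
proof
  define f where "f = (\<lambda>x. \<gamma> *v x)"
  obtain A where A: "A \<in> (GL_int :: (real ^ 'm ^ 'm) set)" "\<And>i j. \<gamma> $ Some i $ Some j = A $ i $ j"
    and row: "\<And>j. \<gamma> $ None $ Some j = 0" "\<gamma> $ None $ None = 1"
    using g unfolding Gamma_aff_def by blast
  obtain B where B: "B ** A = mat 1" using A(1) unfolding GL_int_def by blast
  have lin: "linear f" unfolding f_def by (rule matrix_vector_mul_linear)
  have last: "(\<gamma> *v x) $ None = x $ None" for x
    by (simp add: mv_comp sum_option_UNIV row)
  have inj: "inj f"
    unfolding linear_injective_0[OF lin]
  proof (intro allI impI)
    fix x assume fx: "f x = 0"
    then have xn: "x $ None = 0" using last[of x] by (simp add: f_def)
    define y where "y = (\<chi> j. x $ Some j)"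
    have "(A *v y) $ i = (\<gamma> *v x) $ Some i" for i
      by (simp add: mv_comp sum_option_UNIV xn A(2) y_def)
    then have "A *v y = 0" using fx by (simp add: vec_eq_iff f_def)
    then have "y = 0" using B by (metis matrix_vector_mul_assoc matrix_vector_mul_lid matrix_vector_mult_0_right)
    then have "x $ Some j = 0" for j by (simp add: y_def vec_eq_iff)
    with xn show "x = 0" by (simp add: vec_eq_iff) (metis option.exhaust)
  qed
  define h where "h = (\<lambda>x. (\<gamma> - mat 1) *v x)"
  have linh: "linear h" unfolding h_def by (rule matrix_vector_mul_linear)
  have "\<not> surj h"
  proof
    assume "surj h"
    then obtain x where "h x = axis None 1" by (metis surjD)
    moreover have "(h x) $ None = 0"
      by (simp add: h_def matrix_vector_mult_diff_rdistrib last)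
    ultimately show False by (simp add: axis_def)
  qed
  then have "\<not> inj h" using linh eucl.linear_inj_imp_surj by blast
  then obtain v where v: "h v = 0" "v \<noteq> 0" using linear_injective_0[OF linh] by blast
  have fixv: "f (t *\<^sub>R v) = t *\<^sub>R v" for t
  proof -
    have "\<gamma> *v v = v" using v(1) by (simp add: h_def matrix_vector_mult_diff_rdistrib)
    then show ?thesis by (simp add: f_def matrix_vector_mult_scaleR)
  qed
  have fixall: "G w = w" if "G \<in> cyclic_group f" "w = t *\<^sub>R v" for G w t
  proof -
    have fw: "f w = w" using fixv that(2) by simp
    moreover have "inv f w = w" using inv_f_f[OF inj, of w] fw by simp
    ultimately show ?thesis using that(1) unfolding cyclic_group_def by (auto intro: funpow_fix)
  qed
  assume "expansive (cyclic_group (\<lambda>x. \<gamma> *v x)) 0"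
  then obtain U where U: "0 \<in> interior U" "(\<Inter>G\<in>cyclic_group f. G -` U) = {0}"
    unfolding expansive_def f_def by blast
  obtain e where e: "e > 0" "ball 0 e \<subseteq> U" using U(1) mem_interior by blast
  define w where "w = (e / 2 / norm v) *\<^sub>R v"
  have "norm w = e / 2" using v(2) e(1) by (simp add: w_def)
  then have "w \<in> U" using e by auto
  then have "w \<in> (\<Inter>G\<in>cyclic_group f. G -` U)" proof -
    have "G w = w" if "G \<in> cyclic_group f" for G using fixall[OF that w_def] .
    then show ?thesis
    proof (intro InterI, clarsimp)
      fix G assume h: "\<And>G. G \<in> cyclic_group f \<Longrightarrow> G w = w" "G \<in> cyclic_group f"
      then have "G w = w" by blast
      then show "G w \<in> U" using \<open>w \<in> U\<close> by simp
    qed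
  qed
  moreover have "w \<noteq> 0" using v(2) e(1) by (simp add: w_def)
  ultimately show False using U(2) by blast
qed

theorem mainTheorem11:
  assumes "CARD('m::finite) \<ge> 2"
  shows "(\<forall>x :: real ^ ('m option). x \<noteq> 0 \<longrightarrow>
            \<not> bounded {M *v x | M. M \<in> (Gamma_aff :: (real ^ ('m option) ^ ('m option)) set)})
       \<and> expansive ((\<lambda>M. (\<lambda>x. M *v x)) ` (Gamma_aff :: (real ^ ('m option) ^ ('m option)) set)) 0
       \<and> (\<forall>\<gamma> \<in> (Gamma_aff :: (real ^ ('m option) ^ ('m option)) set).
            \<not> expansive (cyclic_group (\<lambda>x. \<gamma> *v x)) 0)"
proof (intro conjI allI impI ballI)
  fix x :: "real ^ ('m option)" assume "x \<noteq> 0"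
  then show "\<not> bounded {M *v x | M. M \<in> (Gamma_aff :: (real ^ ('m option) ^ ('m option)) set)}"
    using orbit_unbounded[OF assms] by blast
next
  fix \<gamma> assume "\<gamma> \<in> (Gamma_aff :: (real ^ ('m option) ^ ('m option)) set)"
  then show "\<not> expansive (cyclic_group (\<lambda>x. \<gamma> *v x)) 0" by (rule not_expansive)
next
  show "expansive ((\<lambda>M. (\<lambda>x. M *v x)) ` (Gamma_aff :: (real ^ ('m option) ^ ('m option)) set)) 0"
    unfolding expansive_def
  proof (intro exI[of _ "ball 0 1"] conjI)
    show "(0::real ^ ('m option)) \<in> interior (ball 0 1)" by simp
    show "(\<Inter>g\<in>(\<lambda>M. (\<lambda>x. M *v x)) ` (Gamma_aff :: (real ^ ('m option) ^ ('m option)) set). g -` ball 0 1) = {0}"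
    proof
      show "{0} \<subseteq> (\<Inter>g\<in>(\<lambda>M. (\<lambda>x. M *v x)) ` (Gamma_aff :: (real ^ ('m option) ^ ('m option)) set). g -` ball 0 1)"
        by auto
    next
      show "(\<Inter>g\<in>(\<lambda>M. (\<lambda>x. M *v x)) ` (Gamma_aff :: (real ^ ('m option) ^ ('m option)) set). g -` ball 0 1) \<subseteq> {0}"
      proof
        fix x :: "real ^ ('m option)"
        assume x: "x \<in> (\<Inter>g\<in>(\<lambda>M. (\<lambda>x. M *v x)) ` (Gamma_aff :: (real ^ ('m option) ^ ('m option)) set). g -` ball 0 1)"
        show "x \<in> {0}"
        proof (rule ccontr)
          assume "x \<notin> {0}"
          then have nb: "\<not> bounded {M *v x | M. M \<in> (Gamma_aff :: (real ^ ('m option) ^ ('m option)) set)}"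
            using orbit_unbounded[OF assms] by blast
          have "{M *v x | M. M \<in> (Gamma_aff :: (real ^ ('m option) ^ ('m option)) set)} \<subseteq> ball 0 1"
            using x by auto
          then show False using nb bounded_ball bounded_subset by blast
        qed
      qed
    qed
  qed
qed

end
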